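(* The space $(\mathbb{R}^{\mathbb{Z}_<},\tau_{\mathrm{St}})$ is not a Hausdorff space, but it is a preregular space (any two St-distinguishable points can be separated by disjoint neighbourhoods).
   Context: $\mathbb{R}^{\mathbb{Z}_<}$ is the set of formal series $\sum_{i\ge -k}a_i\epsilon^i$ ($k\in\mathbb{N}\cup\{0\}$, $a_i\in\mathbb{R}$), written $\langle a_{-k},\dots,\widehat{a_0},a_1,\dots\rangle$, with coefficientwise addition, Cauchy-product multiplication and lexicographic order ($\mathbf{x}<\mathbf{y}$ iff at the least index where coefficients differ, $\mathbf{x}$'s coefficient is smaller); reals are the elements with only $a_0$ possibly nonzero; $|\mathbf{x}|$ is the absolute value for this order. The metric is $d(\mathbf{x},\mathbf{y})=|\mathbf{y}-\mathbf{x}|\in\mathbb{R}^{\mathbb{Z}_<}$ and $B_{\mathbf{x}}(\mathbf{y})=\{\mathbf{z}: d(\mathbf{x},\mathbf{z})<\mathbf{y}\}$. A set $O$ is St-open iff for every $\mathbf{x}\in O$ there is $n\in\mathbb{N}$ with $B_{\mathbf{x}}(1/n)\subseteq O$; $\tau_{\mathrm{St}}$ is the topology generated by unions of balls with real radius (St-balls), i.e. the St-open sets. Two points are St-distinguishable iff some St-open set contains exactly one of them. *)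

theory Defs
  imports "HOL-Analysis.Analysis"
begin

text \<open>Elements of R^{Z_<}: coefficient functions int => real whose support is
bounded below (formal series sum_{i >= -k} a_i eps^i).\<close>

definition LC :: "(int \<Rightarrow> real) set" where
  "LC = {a. \<exists>k::int. \<forall>i<k. a i = 0}"

definition lc_zero :: "int \<Rightarrow> real" where
  "lc_zero = (\<lambda>i. 0)"

definition lc_of_real :: "real \<Rightarrow> (int \<Rightarrow> real)" where
  "lc_of_real r = (\<lambda>i. if i = 0 then r else 0)"

definition lc_add :: "(int \<Rightarrow> real) \<Rightarrow> (int \<Rightarrow> real) \<Rightarrow> (int \<Rightarrow> real)" where
  "lc_add x y = (\<lambda>i. x i + y i)"

definition lc_neg :: "(int \<Rightarrow> real) \<Rightarrow> (int \<Rightarrow> real)" where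
  "lc_neg x = (\<lambda>i. - x i)"

definition lc_minus :: "(int \<Rightarrow> real) \<Rightarrow> (int \<Rightarrow> real) \<Rightarrow> (int \<Rightarrow> real)" where
  "lc_minus x y = (\<lambda>i. x i - y i)"

definition lc_mult :: "(int \<Rightarrow> real) \<Rightarrow> (int \<Rightarrow> real) \<Rightarrow> (int \<Rightarrow> real)" where
  "lc_mult x y = (\<lambda>k. \<Sum>i\<in>{i. x i \<noteq> 0 \<and> y (k - i) \<noteq> 0}. x i * y (k - i))"

definition lc_less :: "(int \<Rightarrow> real) \<Rightarrow> (int \<Rightarrow> real) \<Rightarrow> bool" where
  "lc_less x y \<longleftrightarrow> (\<exists>i. x i < y i \<and> (\<forall>j<i. x j = y j))"

definition lc_abs :: "(int \<Rightarrow> real) \<Rightarrow> (int \<Rightarrow> real)" where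
  "lc_abs x = (if lc_less x lc_zero then lc_neg x else x)"

definition lc_dist :: "(int \<Rightarrow> real) \<Rightarrow> (int \<Rightarrow> real) \<Rightarrow> (int \<Rightarrow> real)" where
  "lc_dist x y = lc_abs (lc_minus y x)"

definition lc_ball :: "(int \<Rightarrow> real) \<Rightarrow> (int \<Rightarrow> real) \<Rightarrow> (int \<Rightarrow> real) set" where
  "lc_ball x r = {z \<in> LC. lc_less (lc_dist x z) r}"

definition St_open :: "(int \<Rightarrow> real) set \<Rightarrow> bool" where
  "St_open S \<longleftrightarrow> S \<subseteq> LC \<and>
     (\<forall>x\<in>S. \<exists>n::nat. n > 0 \<and> lc_ball x (lc_of_real (1 / real n)) \<subseteq> S)"

definition tau_St :: "(int \<Rightarrow> real) topology" where
  "tau_St = topology St_open"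

definition preregular_space :: "'a topology \<Rightarrow> bool" where
  "preregular_space X \<longleftrightarrow>
     (\<forall>x\<in>topspace X. \<forall>y\<in>topspace X.
        (\<exists>U. openin X U \<and> ((x \<in> U) \<noteq> (y \<in> U))) \<longrightarrow>
        (\<exists>U V. openin X U \<and> openin X V \<and> x \<in> U \<and> y \<in> V \<and> disjnt U V))"

end

theory Submission
  imports Defs
begin

lemma abs_i: "lc_abs d i = (if lc_less d lc_zero then - d i else d i)"
  by (simp add: lc_abs_def lc_neg_def)

lemma abs_abs_i: "\<bar>lc_abs d i\<bar> = \<bar>d i\<bar>"
  by (simp add: abs_i)

lemma abs_nonneg: "\<not> lc_less (lc_abs d) lc_zero"
proof
  assume "lc_less (lc_abs d) lc_zero"
  then obtain i where i: "lc_abs d i < 0" "\<forall>j<i. lc_abs d j = 0"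
    by (auto simp: lc_less_def lc_zero_def)
  show False
  proof (cases "lc_less d lc_zero")
    case True
    then obtain i' where i': "d i' < 0" "\<forall>j<i'. d j = 0"
      by (auto simp: lc_less_def lc_zero_def)
    have a: "d i > 0" "\<forall>j<i. d j = 0" using i True by (auto simp: abs_i)
    consider "i < i'" | "i = i'" | "i' < i" by linarith
    then show False
    proof cases
      case 1 then show ?thesis using a i' by auto
    next
      case 2 then show ?thesis using a i' by auto
    next
      case 3 then show ?thesis using a i' by auto
    qed
  next
    case False
    have "d i < 0" "\<forall>j<i. d j = 0" using i False by (auto simp: abs_i)
    then have "lc_less d lc_zero" by (auto simp: lc_less_def lc_zero_def)
    with False show False by simp
  qed
qed

lemma less_real_cases:
  assumes "lc_less (lc_abs d) (lc_of_real r)" and "r > 0"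
  shows "(\<forall>j<0. d j = 0) \<and> \<bar>d 0\<bar> \<le> r"
proof -
  obtain i where i: "lc_abs d i < lc_of_real r i" "\<forall>j<i. lc_abs d j = lc_of_real r j"
    using assms(1) by (auto simp: lc_less_def)
  have nn: "\<not> (lc_abs d k < 0 \<and> (\<forall>j<k. lc_abs d j = 0))" for k
    using abs_nonneg[of d] by (auto simp: lc_less_def lc_zero_def)
  have z: "d j = 0" if "j < 0" "j < i" for j
    using i(2) that abs_abs_i[of d j] by (auto simp: lc_of_real_def)
  consider "i < 0" | "i = 0" | "i > 0" by linarith
  then show ?thesis
  proof cases
    case 1
    then have "lc_abs d i < 0" "\<forall>j<i. lc_abs d j = 0" using i by (auto simp: lc_of_real_def)
    with nn show ?thesis by blast
  next
    case 2
    have z2: "\<forall>j<0. lc_abs d j = 0" using i 2 by (auto simp: lc_of_real_def)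
    then have "lc_abs d 0 \<ge> 0" using nn[of 0] by force
    moreover have "lc_abs d 0 < r" using i 2 by (auto simp: lc_of_real_def)
    ultimately show ?thesis using z 2 abs_abs_i[of d 0] by auto
  next
    case 3
    have "lc_abs d 0 = r" using i 3 by (auto simp: lc_of_real_def)
    then show ?thesis using z 3 abs_abs_i[of d 0] assms(2) by auto
  qed
qed

lemma less_real_intro:
  assumes "\<forall>j\<le>0. d j = 0" and "r > 0"
  shows "lc_less (lc_abs d) (lc_of_real r)"
  unfolding lc_less_def
  by (rule exI[of _ 0]) (use assms in \<open>auto simp: abs_i lc_of_real_def\<close>)

lemma less_real_mono:
  assumes "lc_less d (lc_of_real r)" "r \<le> r'"
  shows "lc_less d (lc_of_real r')"
proof -
  obtain i where i: "d i < lc_of_real r i" "\<forall>j<i. d j = lc_of_real r j"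
    using assms(1) unfolding lc_less_def by blast
  show ?thesis
  proof (cases "i > 0 \<and> r < r'")
    case True
    have "d 0 = r" using i(2) True by (simp add: lc_of_real_def)
    moreover have "\<forall>j<0. d j = 0" using i(2) True by (simp add: lc_of_real_def)
    ultimately show ?thesis unfolding lc_less_def using True
      by (intro exI[of _ 0]) (simp add: lc_of_real_def)
  next
    case False
    then have c: "i \<le> 0 \<or> r = r'" using assms(2) by auto
    have "d i < lc_of_real r' i" using i(1) c assms(2) by (auto simp: lc_of_real_def)
    moreover have "\<forall>j<i. d j = lc_of_real r' j"
    proof (intro allI impI)
      fix j assume "j < i"
      then have "d j = lc_of_real r j" using i(2) by simp
      moreover have "lc_of_real r j = lc_of_real r' j" using c \<open>j < i\<close> by (auto simp: lc_of_real_def)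
      ultimately show "d j = lc_of_real r' j" by simp
    qed
    ultimately show ?thesis unfolding lc_less_def by blast
  qed
qed

lemma ball_mono:
  assumes "0 < n" "n \<le> m"
  shows "lc_ball x (lc_of_real (1 / real m)) \<subseteq> lc_ball x (lc_of_real (1 / real n))"
proof -
  have le: "1 / real m \<le> 1 / real n" using assms by (simp add: frac_le)
  show ?thesis unfolding lc_ball_def using less_real_mono[OF _ le] by blast
qed

lemma St_openD:
  assumes "St_open S" "x \<in> S"
  obtains n :: nat where "n > 0" "lc_ball x (lc_of_real (1 / real n)) \<subseteq> S"
proof -
  have "\<forall>x\<in>S. \<exists>n::nat. n > 0 \<and> lc_ball x (lc_of_real (1 / real n)) \<subseteq> S"
    using assms(1) unfolding St_open_def by (rule conjunct2)
  then have "\<exists>n::nat. n > 0 \<and> lc_ball x (lc_of_real (1 / real n)) \<subseteq> S"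
    using assms(2) by (rule bspec)
  then show ?thesis using that by (elim exE conjE)
qed

lemma St_openI:
  assumes "S \<subseteq> LC" "\<And>x. x \<in> S \<Longrightarrow> \<exists>n::nat. n > 0 \<and> lc_ball x (lc_of_real (1 / real n)) \<subseteq> S"
  shows "St_open S"
  unfolding St_open_def using assms by (intro conjI ballI)

lemma St_open_LC: "St_open S \<Longrightarrow> S \<subseteq> LC"
  unfolding St_open_def by (rule conjunct1)

lemma isto: "istopology St_open"
  unfolding istopology_def
proof (intro conjI allI impI)
  fix S T assume S: "St_open S" and T: "St_open T"
  show "St_open (S \<inter> T)"
  proof (rule St_openI)
    show "S \<inter> T \<subseteq> LC" using St_open_LC[OF S] by (rule order_trans[OF Int_lower1])
  next
    fix x assume x: "x \<in> S \<inter> T"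
    obtain n where n: "n > 0" "lc_ball x (lc_of_real (1 / real n)) \<subseteq> S"
      using St_openD[OF S] x by blast
    obtain m where m: "m > 0" "lc_ball x (lc_of_real (1 / real m)) \<subseteq> T"
      using St_openD[OF T] x by blast
    have "lc_ball x (lc_of_real (1 / real (max n m))) \<subseteq> S"
      using ball_mono[of n "max n m" x] n by (meson max.cobounded1 order_trans)
    moreover have "lc_ball x (lc_of_real (1 / real (max n m))) \<subseteq> T"
      using ball_mono[of m "max n m" x] m by (meson max.cobounded2 order_trans)
    moreover have "max n m > 0" using n by simp
    ultimately show "\<exists>k::nat. k > 0 \<and> lc_ball x (lc_of_real (1 / real k)) \<subseteq> S \<inter> T"
      by (intro exI[of _ "max n m"] conjI Int_greatest)
  qed
next
  fix K assume K: "\<forall>S\<in>K. St_open S"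
  show "St_open (\<Union>K)"
  proof (rule St_openI)
    show "\<Union>K \<subseteq> LC" using K St_open_LC by (intro Union_least) blast
  next
    fix x assume "x \<in> \<Union>K"
    then obtain S where S: "S \<in> K" "x \<in> S" by (rule UnionE)
    have "St_open S" using K S(1) by (rule bspec)
    then obtain n where n: "n > 0" "lc_ball x (lc_of_real (1 / real n)) \<subseteq> S"
      using St_openD S(2) by blast
    have "S \<subseteq> \<Union>K" using S(1) by (rule Union_upper)
    then show "\<exists>n::nat. n > 0 \<and> lc_ball x (lc_of_real (1 / real n)) \<subseteq> \<Union>K"
      using n by (intro exI[of _ n] conjI) (auto intro: order_trans)
  qed
qed

lemma openin_St: "openin tau_St = St_open"
  unfolding tau_St_def using isto by (simp add: topology_inverse')

lemma LC_open: "St_open LC"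
proof -
  have "lc_ball x (lc_of_real (1 / real (1::nat))) \<subseteq> LC" for x
    unfolding lc_ball_def by blast
  then show ?thesis unfolding St_open_def by (metis less_numeral_extra(1) order_refl)
qed

lemma topspace_St: "topspace tau_St = LC"
proof
  show "topspace tau_St \<subseteq> LC" unfolding topspace_def openin_St St_open_def by blast
  show "LC \<subseteq> topspace tau_St" unfolding topspace_def openin_St using LC_open by blast
qed

lemma slab_open:
  assumes "open A" "x \<in> LC"
  shows "St_open {z \<in> LC. (\<forall>j<0. z j = x j) \<and> z 0 \<in> A}"
  unfolding St_open_def
proof (intro conjI ballI)
  fix z assume z: "z \<in> {z \<in> LC. (\<forall>j<0. z j = x j) \<and> z 0 \<in> A}"
  then obtain e where e: "e > 0" "ball (z 0) e \<subseteq> A" using assms open_contains_ball by blast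
  obtain n where n: "n > 0" "inverse (real n) < e"
    using ex_inverse_of_nat_less[OF e(1)] by auto
  show "\<exists>n::nat. n > 0 \<and> lc_ball z (lc_of_real (1 / real n)) \<subseteq> {z \<in> LC. (\<forall>j<0. z j = x j) \<and> z 0 \<in> A}"
  proof (intro exI[of _ n] conjI subsetI)
    show "n > 0" using n by simp
    fix w assume "w \<in> lc_ball z (lc_of_real (1 / real n))"
    then have w: "w \<in> LC" "lc_less (lc_abs (lc_minus w z)) (lc_of_real (1 / real n))"
      by (auto simp: lc_ball_def lc_dist_def)
    from less_real_cases[OF w(2)] n
    have h: "\<forall>j<0. w j = z j" "\<bar>w 0 - z 0\<bar> \<le> 1 / real n" by (auto simp: lc_minus_def)
    have "\<bar>w 0 - z 0\<bar> < e" using h(2) n(2) by (simp add: divide_inverse)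
    then have "w 0 \<in> ball (z 0) e" by (simp add: dist_real_def abs_minus_commute)
    then show "w \<in> {z \<in> LC. (\<forall>j<0. z j = x j) \<and> z 0 \<in> A}" using h w z e by auto
  qed
qed auto

lemma indist:
  assumes "St_open U" "x \<in> U" "y \<in> LC" "\<forall>j\<le>0. x j = y j"
  shows "y \<in> U"
proof -
  obtain n::nat where n: "n > 0" "lc_ball x (lc_of_real (1 / real n)) \<subseteq> U"
    using assms unfolding St_open_def by blast
  have "lc_less (lc_abs (lc_minus y x)) (lc_of_real (1 / real n))"
    using assms(4) n by (intro less_real_intro) (auto simp: lc_minus_def)
  then have "y \<in> lc_ball x (lc_of_real (1 / real n))"
    using assms(3) by (auto simp: lc_ball_def lc_dist_def)
  with n show ?thesis by auto
qed

theorem mainTheorem2: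
  shows "\<not> Hausdorff_space tau_St \<and> preregular_space tau_St"
proof
  define y :: "int \<Rightarrow> real" where "y = (\<lambda>i. if i = 1 then 1 else 0)"
  have x: "lc_zero \<in> LC" by (auto simp: LC_def lc_zero_def)
  have yL: "y \<in> LC" unfolding LC_def y_def by (auto intro!: exI[of _ 0])
  have ne: "lc_zero \<noteq> y" by (metis lc_zero_def y_def zero_neq_one)
  show "\<not> Hausdorff_space tau_St"
  proof
    assume "Hausdorff_space tau_St"
    then obtain U V where UV: "St_open U" "St_open V" "lc_zero \<in> U" "y \<in> V" "disjnt U V"
      using x yL ne unfolding Hausdorff_space_def topspace_St openin_St by blast
    have "lc_zero \<in> V" using indist[OF UV(2) UV(4) x] by (auto simp: y_def lc_zero_def)
    with UV show False by (auto simp: disjnt_def)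
  qed
next
  show "preregular_space tau_St"
    unfolding preregular_space_def topspace_St openin_St
  proof (intro ballI impI)
    fix x y assume xy: "x \<in> LC" "y \<in> LC" "\<exists>U. St_open U \<and> (x \<in> U) \<noteq> (y \<in> U)"
    have "\<exists>j\<le>0. x j \<noteq> y j"
    proof (rule ccontr)
      assume "\<not> ?thesis"
      then have "\<forall>j\<le>0. x j = y j" by auto
      with xy indist[of _ x y] indist[of _ y x] show False by (metis (no_types, lifting))
    qed
    show "\<exists>U V. St_open U \<and> St_open V \<and> x \<in> U \<and> y \<in> V \<and> disjnt U V"
    proof (cases "\<exists>j<0. x j \<noteq> y j")
      case True
      then obtain j where j: "j < 0" "x j \<noteq> y j" by auto
      show ?thesis
        apply (rule exI[of _ "{z \<in> LC. (\<forall>j<0. z j = x j) \<and> z 0 \<in> UNIV}"])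
        apply (rule exI[of _ "{z \<in> LC. (\<forall>j<0. z j = y j) \<and> z 0 \<in> UNIV}"])
        using slab_open[of UNIV x] slab_open[of UNIV y] xy j
        by (auto simp: disjnt_def)
    next
      case False
      with \<open>\<exists>j\<le>0. x j \<noteq> y j\<close> have x0: "x 0 \<noteq> y 0" by (metis order_le_less)
      define c where "c = (x 0 + y 0) / 2"
      show ?thesis
      proof (cases "x 0 < y 0")
        case True
        show ?thesis
          apply (rule exI[of _ "{z \<in> LC. (\<forall>j<0. z j = x j) \<and> z 0 \<in> {..<c}}"])
          apply (rule exI[of _ "{z \<in> LC. (\<forall>j<0. z j = y j) \<and> z 0 \<in> {c<..}}"])
          using slab_open[of "{..<c}" x] slab_open[of "{c<..}" y] xy True
          by (auto simp: disjnt_def c_def)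
      next
        case False
        then have yx: "y 0 < x 0" using x0 by auto
        show ?thesis
          apply (rule exI[of _ "{z \<in> LC. (\<forall>j<0. z j = x j) \<and> z 0 \<in> {c<..}}"])
          apply (rule exI[of _ "{z \<in> LC. (\<forall>j<0. z j = y j) \<and> z 0 \<in> {..<c}}"])
          using slab_open[of "{..<c}" y] slab_open[of "{c<..}" x] xy(1,2) yx
          by (auto simp: disjnt_def c_def)
      qed
    qed
  qed
qed

end
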